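(* Let $K\subset\mathbb{R}^n$ be nonempty, convex, closed and bounded, let $C=\{x\in\mathbb{R}^m\mid Ax=b,\ x\ge0\}$ be nonempty and bounded, and let $f,h:\mathbb{R}^n\times\mathbb{R}^m\to\mathbb{R}$ be continuously differentiable functions such that, for every $y\in K$, $f(y,\cdot)$ and $h(y,\cdot)$ are convex, and such that $f$ takes only positive values. Let $y^*$ be an optimal solution of $(\widetilde{\mathcal{P}})$, let $x^*\in\widetilde{\mathcal{S}}(y^* )$, set $\alpha^*=h(y^*,x^* )$, $\beta^*=f(y^*,x^* )$ and $C^*=\{x\in C\mid h(y^*,x)\le\alpha^*,\ f(y^*,x)\le\beta^*\}$. Assume there exist $\varepsilon_0>0$ and $\delta>0$ such that for every $x\in C^*+\mathcal{B}(0,\varepsilon_0)$ there exists $\tilde x\in C^*$ with $$\|x-\tilde x\|^2\le\delta\Big[\big(h(y^*,x)-\alpha^*\big)^++\big(f(y^*,x)-\beta^*\big)^+\Big].$$ For every $\varepsilon>0$ let $y_\varepsilon$ be an optimal solution of $(\mathcal{P}_\varepsilon)$ and $x_\varepsilon\in\mathcal{S}_\varepsilon(y_\varepsilon)$. Then $f(y^*,x^* )-f(y_\varepsilon,x_\varepsilon)=o(\sqrt{\varepsilon})$ as $\varepsilon\to0$, and for every $\tau>0$, $f(y^*,x^* )-f(y_\varepsilon,x_\varepsilon)=o(\varepsilon^{1-\tau})$. Moreover, for every choice of $\tilde x_\varepsilon\in\mathcal{S}_\varepsilon(y^* )$ and every $\tau>0$, $h(y^*,\tilde x_\varepsilon)-h(y^*,x^*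 )=o(\varepsilon^{1-\tau})$ as $\varepsilon\to0$.
   Context: $f^2=(f)^2$; $t^+=\max\{t,0\}$; $\mathcal{B}(0,\varepsilon_0)$ is the open ball of radius $\varepsilon_0$ centred at $0$ in $\mathbb{R}^m$. For $y\in K$: $\mathcal{S}(y)=\operatorname{argmin}\{h(y,z)\mid z\in C\}$; for $\varepsilon>0$, $\mathcal{S}_\varepsilon(y)=\operatorname{argmin}\{h(y,z)+\varepsilon f^2(y,z)\mid z\in C\}$; $\widetilde{\mathcal{S}}(y)=\operatorname{argmin}\{f^2(y,z)\mid z\in\mathcal{S}(y)\}$. $(\mathcal{P}_\varepsilon)$: maximize $f(y,x)$ over $y\in K$, $x\in\mathcal{S}_\varepsilon(y)$; $y_\varepsilon\in K$ is optimal if $f(y_\varepsilon,x')\ge f(y,x)$ for all $x'\in\mathcal{S}_\varepsilon(y_\varepsilon)$, $y\in K$, $x\in\mathcal{S}_\varepsilon(y)$. $(\widetilde{\mathcal{P}})$: maximize $f(y,x)$ over $y\in K$, $x\in\widetilde{\mathcal{S}}(y)$; $y^*\in K$ is optimal if $f(y^*,x')\ge f(y,x)$ for all $x'\in\widetilde{\mathcal{S}}(y^* )$, $y\in K$, $x\in\widetilde{\mathcal{S}}(y)$. *)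

theory Defs
  imports "HOL-Analysis.Analysis" "HOL-Library.Landau_Symbols"
begin

definition argmin_set :: "('a \<Rightarrow> real) \<Rightarrow> 'a set \<Rightarrow> 'a set" where
  "argmin_set g D = {z \<in> D. \<forall>z'\<in>D. g z \<le> g z'}"

definition C1_fun :: "('a::real_normed_vector \<Rightarrow> 'b::real_normed_vector) \<Rightarrow> bool" where
  "C1_fun F \<longleftrightarrow> (\<exists>F'. (\<forall>z. (F has_derivative blinfun_apply (F' z)) (at z)) \<and> continuous_on UNIV F')"

definition polyset :: "real^'m^'p \<Rightarrow> real^'p \<Rightarrow> (real^'m) set" where
  "polyset A b = {x. A *v x = b \<and> (\<forall>i. 0 \<le> x $ i)}"

definition S_set :: "('y \<Rightarrow> 'x \<Rightarrow> real) \<Rightarrow> 'x set \<Rightarrow> 'y \<Rightarrow> 'x set" where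
  "S_set h C y = argmin_set (h y) C"

definition S_eps :: "('y \<Rightarrow> 'x \<Rightarrow> real) \<Rightarrow> ('y \<Rightarrow> 'x \<Rightarrow> real) \<Rightarrow> 'x set \<Rightarrow> real \<Rightarrow> 'y \<Rightarrow> 'x set" where
  "S_eps f h C \<epsilon> y = argmin_set (\<lambda>z. h y z + \<epsilon> * (f y z)\<^sup>2) C"

definition S_tilde :: "('y \<Rightarrow> 'x \<Rightarrow> real) \<Rightarrow> ('y \<Rightarrow> 'x \<Rightarrow> real) \<Rightarrow> 'x set \<Rightarrow> 'y \<Rightarrow> 'x set" where
  "S_tilde f h C y = argmin_set (\<lambda>z. (f y z)\<^sup>2) (S_set h C y)"

definition opt_P_eps :: "('y \<Rightarrow> 'x \<Rightarrow> real) \<Rightarrow> ('y \<Rightarrow> 'x \<Rightarrow> real) \<Rightarrow> 'y set \<Rightarrow> 'x set \<Rightarrow> real \<Rightarrow> 'y \<Rightarrow> bool" where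
  "opt_P_eps f h K C \<epsilon> ye \<longleftrightarrow> ye \<in> K \<and>
     (\<forall>x'\<in>S_eps f h C \<epsilon> ye. \<forall>y\<in>K. \<forall>x\<in>S_eps f h C \<epsilon> y. f ye x' \<ge> f y x)"

definition opt_P_tilde :: "('y \<Rightarrow> 'x \<Rightarrow> real) \<Rightarrow> ('y \<Rightarrow> 'x \<Rightarrow> real) \<Rightarrow> 'y set \<Rightarrow> 'x set \<Rightarrow> 'y \<Rightarrow> bool" where
  "opt_P_tilde f h K C ys \<longleftrightarrow> ys \<in> K \<and>
     (\<forall>x'\<in>S_tilde f h C ys. \<forall>y\<in>K. \<forall>x\<in>S_tilde f h C y. f ys x' \<ge> f y x)"

end

theory Submission imports Defs "HOL-Real_Asymp.Real_Asymp" begin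

lemma C1_cont_slice:
  assumes "C1_fun (\<lambda>(y, x). F y x)"
  shows "continuous_on UNIV (F y)"
proof -
  obtain F' where d: "\<And>z. ((\<lambda>(y, x). F y x) has_derivative blinfun_apply (F' z)) (at z)"
    using assms unfolding C1_fun_def by blast
  have c: "continuous_on UNIV (\<lambda>(y, x). F y x)"
    using d has_derivative_continuous continuous_at_imp_continuous_on by blast
  have "continuous_on UNIV ((\<lambda>(y, x). F y x) \<circ> (\<lambda>x. (y, x)))"
    by (rule continuous_on_compose) (auto intro!: continuous_intros continuous_on_subset[OF c])
  then show ?thesis by (simp add: o_def)
qed

lemma C1_lip_slice:
  fixes F :: "'a::euclidean_space \<Rightarrow> 'b::euclidean_space \<Rightarrow> real"
  assumes "C1_fun (\<lambda>(y, x). F y x)" "bounded S"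
  shows "\<exists>L\<ge>0. \<forall>a\<in>S. \<forall>b\<in>S. \<bar>F y a - F y b\<bar> \<le> L * norm (a - b)"
proof -
  obtain F' where d: "\<And>z. ((\<lambda>(y, x). F y x) has_derivative blinfun_apply (F' z)) (at z)"
    and cF': "continuous_on UNIV F'"
    using assms unfolding C1_fun_def by blast
  obtain R where "\<forall>x\<in>S. norm x \<le> R" using assms(2) unfolding bounded_pos by blast
  then have R: "S \<subseteq> cball 0 R" by auto
  have "compact ({y} \<times> cball (0::'b) R)"
    by (intro compact_Times) auto
  then have "compact (F' ` ({y} \<times> cball 0 R))"
    by (intro compact_continuous_image continuous_on_subset[OF cF']) auto
  then have "bounded (F' ` ({y} \<times> cball 0 R))" by (rule compact_imp_bounded)
  then obtain B where B0: "B > 0" and B1: "\<forall>w \<in> F' ` ({y} \<times> cball 0 R). norm w \<le> B"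
    unfolding bounded_pos by blast
  have B: "B > 0" "\<And>z. z \<in> {y} \<times> cball 0 R \<Longrightarrow> norm (F' z) \<le> B"
    using B0 B1 by auto
  have der: "(F y has_derivative (blinfun_apply (F' (y, x)) \<circ> (\<lambda>v. (0, v)))) (at x within cball 0 R)" for x
  proof -
    have "((\<lambda>x. (y, x)) has_derivative (\<lambda>v. (0, v))) (at x within cball 0 R)"
      by (auto intro!: derivative_eq_intros)
    from has_derivative_compose[OF this d[of "(y, x)"]] show ?thesis by (simp add: o_def)
  qed
  have on: "onorm (blinfun_apply (F' (y, x)) \<circ> (\<lambda>v. (0, v))) \<le> B" if "x \<in> cball 0 R" for x
  proof -
    have bl: "bounded_linear (\<lambda>v::'b. (0::'a, v))"
      by (auto intro!: bounded_linear_intros)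
    have "onorm (\<lambda>v::'b. (0::'a, v)) \<le> 1"
      by (rule onorm_bound) (auto simp: norm_Pair)
    moreover have "onorm (blinfun_apply (F' (y, x)) \<circ> (\<lambda>v. (0, v))) \<le> onorm (blinfun_apply (F' (y, x))) * onorm (\<lambda>v::'b. (0::'a, v))"
      by (rule onorm_compose[OF blinfun.bounded_linear_right bl])
    moreover have "onorm (blinfun_apply (F' (y, x))) \<le> B"
      using B(2)[of "(y,x)"] that by (simp add: norm_blinfun.rep_eq)
    moreover have "onorm (blinfun_apply (F' (y, x))) \<ge> 0" by (metis norm_blinfun.rep_eq norm_ge_zero)
    ultimately show ?thesis
      by (meson mult_left_le order_trans)
  qed
  have "\<bar>F y a - F y b\<bar> \<le> B * norm (a - b)" if "a \<in> S" "b \<in> S" for a b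
  proof -
    have "norm (F y a - F y b) \<le> B * norm (a - b)"
      by (rule differentiable_bound[OF convex_cball der on]) (use that R in auto)
    then show ?thesis by simp
  qed
  then show ?thesis using B(1) by (intro exI[of _ B]) auto
qed

lemma argmin_nonempty:
  assumes "compact D" "D \<noteq> {}" "continuous_on D g"
  shows "argmin_set g D \<noteq> {}"
  using continuous_attains_inf[OF assms] unfolding argmin_set_def by auto

lemma argmin_compact:
  fixes g :: "'a::topological_space \<Rightarrow> real"
  assumes "compact D" "D \<noteq> {}" "continuous_on UNIV g"
  shows "compact (argmin_set g D)"
proof -
  obtain z0 where z0: "z0 \<in> argmin_set g D"
    using argmin_nonempty[OF assms(1,2) continuous_on_subset[OF assms(3)]] by auto
  have "argmin_set g D = D \<inter> {z. g z \<le> g z0}"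
    using z0 unfolding argmin_set_def by (auto intro: order_trans)
  moreover have "closed {z. g z \<le> g z0}"
    by (rule closed_Collect_le[OF assms(3)]) auto
  ultimately show ?thesis using assms(1) compact_Int_closed by metis
qed

lemma polyset_closed: "closed (polyset A b)"
  unfolding polyset_def
  by (intro closed_Collect_conj closed_Collect_all closed_Collect_le closed_Collect_eq continuous_intros)

lemma small_from_big:
  assumes "D \<in> O[at_right 0](\<lambda>x::real. x)"
  shows "D \<in> o[at_right 0](\<lambda>x. sqrt x)" "\<And>\<tau>. \<tau> > 0 \<Longrightarrow> D \<in> o[at_right 0](\<lambda>x. x powr (1 - \<tau>))"
proof -
  have "(\<lambda>x::real. x) \<in> o[at_right 0](\<lambda>x. sqrt x)" by real_asymp
  then show "D \<in> o[at_right 0](\<lambda>x. sqrt x)" using landau_o.big_small_trans[OF assms] by blast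
next
  fix \<tau> :: real assume "\<tau> > 0"
  then have "(\<lambda>x::real. x) \<in> o[at_right 0](\<lambda>x. x powr (1 - \<tau>))" by real_asymp
  then show "D \<in> o[at_right 0](\<lambda>x. x powr (1 - \<tau>))" using landau_o.big_small_trans[OF assms] by blast
qed

theorem theorem4p2:
  fixes K :: "(real^'n) set" and A :: "real^'m^'p" and b :: "real^'p"
    and f h :: "real^'n \<Rightarrow> real^'m \<Rightarrow> real"
    and ystar :: "real^'n" and xstar :: "real^'m"
    and \<epsilon>0 \<delta> :: real
    and yeps :: "real \<Rightarrow> real^'n" and xeps :: "real \<Rightarrow> real^'m"
  assumes K: "K \<noteq> {}" "convex K" "closed K" "bounded K"
    and C: "polyset A b \<noteq> {}" "bounded (polyset A b)"
    and f_C1: "C1_fun (\<lambda>(y, x). f y x)"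
    and h_C1: "C1_fun (\<lambda>(y, x). h y x)"
    and f_cvx: "\<forall>y\<in>K. convex_on UNIV (f y)"
    and h_cvx: "\<forall>y\<in>K. convex_on UNIV (h y)"
    and f_pos: "\<forall>y x. f y x > 0"
    and ystar: "opt_P_tilde f h K (polyset A b) ystar"
    and xstar: "xstar \<in> S_tilde f h (polyset A b) ystar"
    and eb: "\<epsilon>0 > 0" "\<delta> > 0"
    and error_bound:
      "\<forall>x \<in> {c + u | c u. c \<in> {z \<in> polyset A b. h ystar z \<le> h ystar xstar \<and> f ystar z \<le> f ystar xstar}
                            \<and> u \<in> ball 0 \<epsilon>0}.
         \<exists>xt \<in> {z \<in> polyset A b. h ystar z \<le> h ystar xstar \<and> f ystar z \<le> f ystar xstar}.
           (norm (x - xt))\<^sup>2 \<le> \<delta> * (max (h ystar x - h ystar xstar) 0 + max (f ystar x - f ystar xstar) 0)"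
    and yeps: "\<forall>\<epsilon>>0. opt_P_eps f h K (polyset A b) \<epsilon> (yeps \<epsilon>)"
    and xeps: "\<forall>\<epsilon>>0. xeps \<epsilon> \<in> S_eps f h (polyset A b) \<epsilon> (yeps \<epsilon>)"
  shows "(\<lambda>\<epsilon>. f ystar xstar - f (yeps \<epsilon>) (xeps \<epsilon>)) \<in> o[at_right 0](\<lambda>\<epsilon>. sqrt \<epsilon>)
       \<and> (\<forall>\<tau>>0. (\<lambda>\<epsilon>. f ystar xstar - f (yeps \<epsilon>) (xeps \<epsilon>)) \<in> o[at_right 0](\<lambda>\<epsilon>. \<epsilon> powr (1 - \<tau>)))
       \<and> (\<forall>xt :: real \<Rightarrow> real^'m. (\<forall>\<epsilon>>0. xt \<epsilon> \<in> S_eps f h (polyset A b) \<epsilon> ystar) \<longrightarrow>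
            (\<forall>\<tau>>0. (\<lambda>\<epsilon>. h ystar (xt \<epsilon>) - h ystar xstar) \<in> o[at_right 0](\<lambda>\<epsilon>. \<epsilon> powr (1 - \<tau>))))"

proof -
  define C where "C = polyset A b"
  define g where "g = f ystar"
  define k where "k = h ystar"
  define \<alpha> where "\<alpha> = k xstar"
  define \<beta> where "\<beta> = g xstar"
  define Cs where "Cs = {z \<in> C. k z \<le> \<alpha> \<and> g z \<le> \<beta>}"
  have Cne: "C \<noteq> {}" and Cb: "bounded C" using C by (auto simp: C_def)
  have Ccomp: "compact C" using Cb polyset_closed unfolding C_def by (simp add: compact_eq_bounded_closed)
  have contf: "\<And>y. continuous_on UNIV (f y)" using C1_cont_slice[OF f_C1] by blast
  have conth: "\<And>y. continuous_on UNIV (h y)" using C1_cont_slice[OF h_C1] by blast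
  have contf2: "\<And>y. continuous_on UNIV (\<lambda>z. (f y z)\<^sup>2)"
    using contf by (auto intro: continuous_intros)
  have contg: "continuous_on UNIV g" and contk: "continuous_on UNIV k"
    using contf conth by (auto simp: g_def k_def)
  have xsS: "xstar \<in> S_set h C ystar" and xsmin: "\<forall>z\<in>S_set h C ystar. (g xstar)\<^sup>2 \<le> (g z)\<^sup>2"
    using xstar by (auto simp: S_tilde_def argmin_set_def C_def g_def)
  have xsC: "xstar \<in> C" and hmin: "\<forall>z\<in>C. \<alpha> \<le> k z"
    using xsS by (auto simp: S_set_def argmin_set_def \<alpha>_def k_def)
  have bpos: "\<beta> > 0" using f_pos by (simp add: \<beta>_def g_def)
  have gpos: "\<And>z. g z > 0" using f_pos by (simp add: g_def)
  have Seps: "x \<in> C \<and> \<alpha> \<le> k x \<and> k x + \<epsilon> * (g x)\<^sup>2 \<le> \<alpha> + \<epsilon> * \<beta>\<^sup>2 \<and> g x \<le> \<beta>"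
    if "\<epsilon> > 0" "x \<in> S_eps f h C \<epsilon> ystar" for \<epsilon> x
  proof -
    have xC: "x \<in> C" and le: "k x + \<epsilon> * (g x)\<^sup>2 \<le> \<alpha> + \<epsilon> * \<beta>\<^sup>2"
      using that xsC by (auto simp: S_eps_def argmin_set_def g_def k_def \<alpha>_def \<beta>_def)
    have a: "\<alpha> \<le> k x" using hmin xC by auto
    then have "\<epsilon> * (g x)\<^sup>2 \<le> \<epsilon> * \<beta>\<^sup>2" using le by linarith
    then have "(g x)\<^sup>2 \<le> \<beta>\<^sup>2" using that(1) by simp
    then have "g x \<le> \<beta>" using bpos gpos[of x] by (simp add: power2_le_iff_abs_le)
    with xC a le show ?thesis by auto
  qed
  have Sepsne: "S_eps f h C \<epsilon> y \<noteq> {}" for \<epsilon> y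
    unfolding S_eps_def
    by (rule argmin_nonempty[OF Ccomp Cne]) (auto intro!: continuous_intros continuous_on_subset[OF contf2] continuous_on_subset[OF conth])
  have Dlow: "0 \<le> \<beta> - f (yeps \<epsilon>) (xeps \<epsilon>)" if "\<epsilon> > 0" for \<epsilon>
  proof -
    let ?y = "yeps \<epsilon>"
    have yK: "?y \<in> K" using yeps that by (auto simp: opt_P_eps_def C_def)
    have "S_set h C ?y \<noteq> {}" "compact (S_set h C ?y)"
      unfolding S_set_def
      using argmin_nonempty[OF Ccomp Cne continuous_on_subset[OF conth]] argmin_compact[OF Ccomp Cne conth]
      by auto
    from argmin_nonempty[OF this(2) this(1) continuous_on_subset[OF contf2]]
    obtain xh where xh: "xh \<in> S_tilde f h C ?y" unfolding S_tilde_def by blast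
    have "f ?y xh \<le> \<beta>" using ystar yK xh xstar by (auto simp: opt_P_tilde_def C_def \<beta>_def g_def)
    moreover have "f ?y (xeps \<epsilon>) \<le> f ?y xh"
    proof -
      have xe: "xeps \<epsilon> \<in> C" "h ?y (xeps \<epsilon>) + \<epsilon> * (f ?y (xeps \<epsilon>))\<^sup>2 \<le> h ?y xh + \<epsilon> * (f ?y xh)\<^sup>2"
        using xeps that xh by (auto simp: S_eps_def S_tilde_def S_set_def argmin_set_def C_def)
      have "h ?y xh \<le> h ?y (xeps \<epsilon>)" using xh xe(1) by (auto simp: S_tilde_def S_set_def argmin_set_def)
      then have "\<epsilon> * (f ?y (xeps \<epsilon>))\<^sup>2 \<le> \<epsilon> * (f ?y xh)\<^sup>2" using xe(2) by linarith
      then have "(f ?y (xeps \<epsilon>))\<^sup>2 \<le> (f ?y xh)\<^sup>2" using that by simp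
      then show ?thesis using f_pos[rule_format, of ?y xh] f_pos[rule_format, of ?y "xeps \<epsilon>"]
        by (simp add: power2_le_iff_abs_le)
    qed
    ultimately show ?thesis by linarith
  qed
  have Dup: "\<beta> - f (yeps \<epsilon>) (xeps \<epsilon>) \<le> \<beta> - g x" if "\<epsilon> > 0" "x \<in> S_eps f h C \<epsilon> ystar" for \<epsilon> x
  proof -
    have "xeps \<epsilon> \<in> S_eps f h C \<epsilon> (yeps \<epsilon>)" using xeps that by (simp add: C_def)
    moreover have "ystar \<in> K" using ystar by (simp add: opt_P_tilde_def)
    ultimately have "g x \<le> f (yeps \<epsilon>) (xeps \<epsilon>)"
      using yeps that unfolding opt_P_eps_def C_def g_def by blast
    then show ?thesis by simp
  qed
  have close: "\<exists>e>0. \<forall>\<epsilon>. 0 < \<epsilon> \<and> \<epsilon> < e \<longrightarrow> (\<forall>x\<in>S_eps f h C \<epsilon> ystar. \<exists>c\<in>Cs. dist x c < \<epsilon>0)"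
  proof -
    define F where "F = C \<inter> {x. g x \<le> \<beta>} \<inter> (\<Inter>c\<in>Cs. {x. \<epsilon>0 \<le> dist x c})"
    have Fcl: "closed (C \<inter> {x. g x \<le> \<beta>} \<inter> (\<Inter>c\<in>Cs. {x. \<epsilon>0 \<le> dist x c}))"
      using polyset_closed[of A b] unfolding C_def
      by (intro closed_Int closed_INT ballI closed_Collect_le contg continuous_intros) auto
    have Fcomp: "compact F" unfolding F_def
      using compact_Int_closed[OF Ccomp, of "{x. g x \<le> \<beta>} \<inter> (\<Inter>c\<in>Cs. {x. \<epsilon>0 \<le> dist x c})"] Fcl
      by (simp add: Int_assoc closed_Int closed_INT closed_Collect_le contg continuous_intros)
    show ?thesis
    proof (cases "F = {}")
      case True
      show ?thesis
      proof (intro exI[of _ 1] conjI allI impI ballI)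
        fix \<epsilon> x assume "0 < \<epsilon> \<and> \<epsilon> < 1" "x \<in> S_eps f h C \<epsilon> ystar"
        then have "x \<in> C" "g x \<le> \<beta>" using Seps by auto
        then show "\<exists>c\<in>Cs. dist x c < \<epsilon>0" using True unfolding F_def by force
      qed simp
    next
      case False
      obtain x0 where x0: "x0 \<in> F" "\<And>x. x \<in> F \<Longrightarrow> k x0 \<le> k x"
        using continuous_attains_inf[OF Fcomp False continuous_on_subset[OF contk]] by blast
      have "\<alpha> < k x0"
      proof (rule ccontr)
        assume "\<not> \<alpha> < k x0"
        then have "x0 \<in> Cs" using x0(1) by (auto simp: F_def Cs_def)
        then have "\<epsilon>0 \<le> dist x0 x0" using x0(1) by (auto simp: F_def)
        then show False using eb by simp
      qed
      define e where "e = (k x0 - \<alpha>) / \<beta>\<^sup>2"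
      have epos: "e > 0" using \<open>\<alpha> < k x0\<close> bpos by (simp add: e_def)
      show ?thesis
      proof (intro exI[of _ e] conjI allI impI ballI epos)
        fix \<epsilon> x assume e1: "0 < \<epsilon> \<and> \<epsilon> < e" and xS: "x \<in> S_eps f h C \<epsilon> ystar"
        then have sx: "x \<in> C" "g x \<le> \<beta>" "k x + \<epsilon> * (g x)\<^sup>2 \<le> \<alpha> + \<epsilon> * \<beta>\<^sup>2" using Seps by auto
        have "\<epsilon> * \<beta>\<^sup>2 < k x0 - \<alpha>" using e1 bpos by (simp add: e_def pos_less_divide_eq)
        moreover have "0 \<le> \<epsilon> * (g x)\<^sup>2" using e1 by simp
        ultimately have "k x < k x0" using sx(3) by linarith
        then have "x \<notin> F" using x0(2) by force
        then show "\<exists>c\<in>Cs. dist x c < \<epsilon>0" using sx unfolding F_def by force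
      qed
    qed
  qed
  then obtain e where epos: "e > 0"
    and ecl: "\<And>\<epsilon> x. 0 < \<epsilon> \<Longrightarrow> \<epsilon> < e \<Longrightarrow> x \<in> S_eps f h C \<epsilon> ystar \<Longrightarrow> \<exists>c\<in>Cs. dist x c < \<epsilon>0"
    by blast
  obtain L where L0: "L \<ge> 0" and Lip: "\<forall>a\<in>C. \<forall>b\<in>C. \<bar>g a - g b\<bar> \<le> L * norm (a - b)"
    using C1_lip_slice[OF f_C1 Cb, of ystar] unfolding g_def by blast
  define Kc where "Kc = 2 * L\<^sup>2 * \<delta> * \<beta>"
  have key: "\<beta> - g x \<le> Kc * \<epsilon>" if kp: "0 < \<epsilon>" "\<epsilon> < e" "x \<in> S_eps f h C \<epsilon> ystar" for \<epsilon> x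
  proof -
    have sx: "x \<in> C" "\<alpha> \<le> k x" "k x + \<epsilon> * (g x)\<^sup>2 \<le> \<alpha> + \<epsilon> * \<beta>\<^sup>2" "g x \<le> \<beta>"
      using Seps that by auto
    obtain c where c: "c \<in> Cs" "dist x c < \<epsilon>0" using ecl kp by blast
    have "x \<in> {c + u | c u. c \<in> Cs \<and> u \<in> ball 0 \<epsilon>0}"
    proof -
      have "x - c \<in> ball 0 \<epsilon>0" using c(2) by (simp add: dist_norm norm_minus_commute)
      moreover have "x = c + (x - c)" by simp
      ultimately show ?thesis using c(1) by blast
    qed
    then obtain xt where xt: "xt \<in> Cs"
      and eb2: "(norm (x - xt))\<^sup>2 \<le> \<delta> * (max (k x - \<alpha>) 0 + max (g x - \<beta>) 0)"
      using error_bound unfolding Cs_def C_def k_def \<alpha>_def g_def \<beta>_def by blast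
    have n2: "(norm (x - xt))\<^sup>2 \<le> \<delta> * (k x - \<alpha>)" using eb2 sx by simp
    have xtC: "xt \<in> C" and "k xt \<le> \<alpha>" using xt by (auto simp: Cs_def)
    then have "xt \<in> S_set h C ystar" using hmin by (auto simp: S_set_def argmin_set_def k_def)
    then have "\<beta>\<^sup>2 \<le> (g xt)\<^sup>2" using xsmin by (simp add: \<beta>_def)
    then have bxt: "\<beta> \<le> g xt" using bpos gpos[of xt] by (simp add: power2_le_iff_abs_le)
    define d where "d = \<beta> - g x"
    have d0: "d \<ge> 0" using sx by (simp add: d_def)
    have dL: "d \<le> L * norm (x - xt)"
      using Lip xtC sx(1) bxt by (smt (verit, best) d_def norm_minus_commute)
    have "k x - \<alpha> \<le> \<epsilon> * (\<beta>\<^sup>2 - (g x)\<^sup>2)" using sx(3) by (simp add: algebra_simps)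
    also have "\<beta>\<^sup>2 - (g x)\<^sup>2 = d * (\<beta> + g x)" by (simp add: d_def power2_eq_square algebra_simps)
    also have "\<epsilon> * (d * (\<beta> + g x)) \<le> \<epsilon> * (d * (2 * \<beta>))"
      using kp(1) d0 sx(4) by (intro mult_left_mono) auto
    finally have kx: "k x - \<alpha> \<le> 2 * \<beta> * \<epsilon> * d" by (simp add: algebra_simps)
    have "d\<^sup>2 \<le> (L * norm (x - xt))\<^sup>2" using dL d0 by (simp add: power_mono)
    also have "\<dots> = L\<^sup>2 * (norm (x - xt))\<^sup>2" by (simp add: power_mult_distrib)
    also have "\<dots> \<le> L\<^sup>2 * (\<delta> * (k x - \<alpha>))" using n2 by (simp add: mult_left_mono)
    also have "\<dots> \<le> L\<^sup>2 * (\<delta> * (2 * \<beta> * \<epsilon> * d))" using kx eb by (intro mult_left_mono) auto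
    finally have "d * d \<le> (Kc * \<epsilon>) * d" by (simp add: Kc_def power2_eq_square algebra_simps)
    then have "d \<le> Kc * \<epsilon>" using d0
      by (cases "d = 0") (auto simp: Kc_def eb bpos kp(1) less_imp_le intro!: mult_nonneg_nonneg intro: mult_right_le_imp_le)
    then show ?thesis by (simp add: d_def)
  qed
  have bigD: "(\<lambda>\<epsilon>. f ystar xstar - f (yeps \<epsilon>) (xeps \<epsilon>)) \<in> O[at_right 0](\<lambda>x. x)"
  proof (rule bigoI[where c = Kc])
    show "\<forall>\<^sub>F x in at_right 0. norm (f ystar xstar - f (yeps x) (xeps x)) \<le> Kc * norm x"
      unfolding eventually_at_right_field
    proof (intro exI[of _ e] conjI allI impI epos)
      fix \<epsilon> :: real assume "0 < \<epsilon>" "\<epsilon> < e"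
      obtain x where x: "x \<in> S_eps f h C \<epsilon> ystar" using Sepsne by blast
      show "norm (f ystar xstar - f (yeps \<epsilon>) (xeps \<epsilon>)) \<le> Kc * norm \<epsilon>"
        using Dlow[of \<epsilon>] Dup[OF \<open>0 < \<epsilon>\<close> x] key[OF \<open>0 < \<epsilon>\<close> \<open>\<epsilon> < e\<close> x] \<open>0 < \<epsilon>\<close>
        by (simp add: \<beta>_def g_def)
    qed
  qed
  have third: "(\<lambda>\<epsilon>. h ystar (xt \<epsilon>) - h ystar xstar) \<in> O[at_right 0](\<lambda>x. x)"
    if xt: "\<forall>\<epsilon>>0. xt \<epsilon> \<in> S_eps f h (polyset A b) \<epsilon> ystar" for xt :: "real \<Rightarrow> real^'m"
  proof (rule bigoI[where c = "\<beta>\<^sup>2"])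
    show "\<forall>\<^sub>F x in at_right 0. norm (h ystar (xt x) - h ystar xstar) \<le> \<beta>\<^sup>2 * norm x"
      unfolding eventually_at_right_field
    proof (intro exI[of _ 1] conjI allI impI)
      fix \<epsilon> :: real assume "0 < \<epsilon>" "\<epsilon> < 1"
      then have "xt \<epsilon> \<in> S_eps f h C \<epsilon> ystar" using xt by (simp add: C_def)
      from Seps[OF \<open>0 < \<epsilon>\<close> this]
      have s1: "\<alpha> \<le> k (xt \<epsilon>)" and s2: "k (xt \<epsilon>) + \<epsilon> * (g (xt \<epsilon>))\<^sup>2 \<le> \<alpha> + \<epsilon> * \<beta>\<^sup>2" by auto
      have "0 \<le> \<epsilon> * (g (xt \<epsilon>))\<^sup>2" using \<open>0 < \<epsilon>\<close> by simp
      with s1 s2 have "\<alpha> \<le> k (xt \<epsilon>)" "k (xt \<epsilon>) - \<alpha> \<le> \<epsilon> * \<beta>\<^sup>2" by linarith+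
      then show "norm (h ystar (xt \<epsilon>) - h ystar xstar) \<le> \<beta>\<^sup>2 * norm \<epsilon>"
        using \<open>0 < \<epsilon>\<close> by (simp add: k_def \<alpha>_def algebra_simps)
    qed simp
  qed
  show ?thesis
    using small_from_big[OF bigD] small_from_big(2)[OF third] by blast
qed

end
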